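(* In the learning procedure described in the context, let $j\ge1$ be an iteration at which the candidate $c_j\in C_{j-1}$ is refuted by the verifier with counterexample $x_j$ (so that $C_j$ is defined). Then there exists a half-space $H^*_j=\{c\in\mathbb{R}^r : a^t c\ge \beta\}$ ($a\in\mathbb{R}^r$ nonzero, $\beta\in\mathbb{R}$) such that (a) $c_j$ lies on the boundary hyperplane $\{c: a^tc=\beta\}$ of $H^*_j$, and (b) $C_j\subseteq C_{j-1}\cap H^*_j$.
   Context: Let $X\subseteq\mathbb{R}^n$ contain $0$, $U=\{u\in\mathbb{R}^m: Au\ge b\}$, and $f:X\times U\to\mathbb{R}^n$ continuously differentiable with $f(0,0)=0$. A control Lyapunov function (CLF) is a smooth radially unbounded $V$ with $V(0)=0$, $V(x)>0$ for $x\neq0$, and $\min_{u\in U}\nabla V(x)\cdot f(x,u)<0$ for $x\ne 0$. Fix differentiable basis functions $g_1,\dots,g_r$, set $V_c=\sum_k c_kg_k$, let $C\subseteq\mathbb{R}^r$ be a hyper-rectangular box and $\mathcal{D}:X\to U$ an arbitrary demonstrator. The learning procedure: $C_0=\{c\in C:V_c(0)=0\}$; at iteration $j\ge1$, if $C_{j-1}\ne\emptyset$ choose $c_j\in C_{j-1}$; a verifier either certifies $V_{c_j}$ as a CLF or returns $x_j\neq0$ with $V_{c_j}(x_j)\le0$ or $\nabla V_{c_j}(x_j)\cdot f(x_j,u)\ge0$ for all $u\in U$; then $u_j=\mathcal{D}(x_j)$ and $C_j=C_{j-1}\cap\{c:V_c(x_j)>0\text{ and }\nabla V_c(x_j)\cdot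 f(x_j,u_j)<0\}$. *)

theory Defs
  imports "HOL-Analysis.Analysis"
begin

definition Vc :: "('r::finite \<Rightarrow> real^'n::finite \<Rightarrow> real) \<Rightarrow> real^'r \<Rightarrow> real^'n \<Rightarrow> real" where
  "Vc g c x = (\<Sum>k\<in>UNIV. c $ k * g k x)"

definition gradVc :: "('r::finite \<Rightarrow> real^'n::finite \<Rightarrow> real^'n) \<Rightarrow> real^'r \<Rightarrow> real^'n \<Rightarrow> real^'n" where
  "gradVc dg c x = (\<Sum>k\<in>UNIV. c $ k *\<^sub>R dg k x)"

end

theory Submission
  imports Defs
begin

lemma Vc_inner: "Vc g c x = (\<chi> k. g k x) \<bullet> c"
  by (simp add: Vc_def inner_vec_def mult.commute)

lemma gradVc_inner: "gradVc dg c x \<bullet> v = (\<chi> k. dg k x \<bullet> v) \<bullet> c"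
proof -
  have "gradVc dg c x \<bullet> v = (\<Sum>k\<in>UNIV. c $ k * (dg k x \<bullet> v))"
    by (simp add: gradVc_def inner_sum_left)
  also have "\<dots> = (\<chi> k. dg k x \<bullet> v) \<bullet> c"
    by (simp add: inner_vec_def mult.commute)
  finally show ?thesis .
qed

theorem lemma2:
  fixes X :: "(real^'n::finite) set"
    and A :: "real^'m::finite^'p::finite" and b :: "real^'p"
    and U :: "(real^'m) set"
    and f :: "(real^'n) \<times> (real^'m) \<Rightarrow> real^'n"
    and g :: "'r::finite \<Rightarrow> real^'n \<Rightarrow> real"
    and dg :: "'r \<Rightarrow> real^'n \<Rightarrow> real^'n"
    and lo hi :: "real^'r"
    and C :: "(real^'r) set"
    and D :: "real^'n \<Rightarrow> real^'m"
    and Cs :: "nat \<Rightarrow> (real^'r) set"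
    and cs :: "nat \<Rightarrow> real^'r"
    and xs :: "nat \<Rightarrow> real^'n"
    and j :: nat
  assumes X0: "0 \<in> X"
    and U_def: "U = {u. \<forall>i. (A *v u) $ i \<ge> b $ i}"
    and f_C1: "\<exists>f'. (\<forall>z\<in>X \<times> U. (f has_derivative blinfun_apply (f' z)) (at z within X \<times> U))
                    \<and> continuous_on (X \<times> U) f'"
    and f00: "f (0, 0) = 0"
    and g_grad: "\<And>k x. GDERIV (g k) x :> dg k x"
    and C_box: "C = cbox lo hi"
    and D_maps: "\<And>x. x \<in> X \<Longrightarrow> D x \<in> U"
    and C0: "Cs 0 = {c \<in> C. Vc g c 0 = 0}"
    and choose: "\<And>i. 1 \<le> i \<Longrightarrow> i \<le> j \<Longrightarrow> cs i \<in> Cs (i - 1)"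
    and cex_in: "\<And>i. 1 \<le> i \<Longrightarrow> i \<le> j \<Longrightarrow> xs i \<in> X \<and> xs i \<noteq> 0"
    and cex: "\<And>i. 1 \<le> i \<Longrightarrow> i \<le> j \<Longrightarrow>
               Vc g (cs i) (xs i) \<le> 0 \<or> (\<forall>u\<in>U. gradVc dg (cs i) (xs i) \<bullet> f (xs i, u) \<ge> 0)"
    and update: "\<And>i. 1 \<le> i \<Longrightarrow> i \<le> j \<Longrightarrow>
               Cs i = Cs (i - 1) \<inter> {c. Vc g c (xs i) > 0 \<and> gradVc dg c (xs i) \<bullet> f (xs i, D (xs i)) < 0}"
    and j1: "1 \<le> j"
  shows "\<exists>a \<beta>. a \<noteq> 0 \<and> a \<bullet> cs j = \<beta> \<and> Cs j \<subseteq> Cs (j - 1) \<inter> {c. a \<bullet> c \<ge> \<beta>}"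
proof -
  let ?x = "xs j"
  have xX: "?x \<in> X" using cex_in[OF j1 order.refl] by simp
  have DU: "D ?x \<in> U" using D_maps[OF xX] .
  have upd: "Cs j = Cs (j - 1) \<inter> {c. Vc g c ?x > 0 \<and> gradVc dg c ?x \<bullet> f (?x, D ?x) < 0}"
    using update[OF j1 order.refl] .
  have ax: "axis undefined (1::real) \<noteq> (0::real^'r)" by (simp add: axis_eq_0_iff)
  show ?thesis
  proof (cases "Cs j = {}")
    case True
    then show ?thesis using ax by blast
  next
    case False
    then obtain c0 where c0: "c0 \<in> Cs j" by blast
    from cex[OF j1 order.refl] show ?thesis
    proof
      assume h: "Vc g (cs j) ?x \<le> 0"
      let ?a = "(\<chi> k. g k ?x) :: real^'r"
      have "?a \<bullet> c0 > 0" using c0 upd by (simp add: Vc_inner)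
      hence "?a \<noteq> 0" by auto
      moreover have "Cs j \<subseteq> Cs (j - 1) \<inter> {c. ?a \<bullet> c \<ge> ?a \<bullet> cs j}"
        using upd h by (auto simp: Vc_inner)
      ultimately show ?thesis by blast
    next
      assume h: "\<forall>u\<in>U. gradVc dg (cs j) ?x \<bullet> f (?x, u) \<ge> 0"
      let ?w = "(\<chi> k. dg k ?x \<bullet> f (?x, D ?x)) :: real^'r"
      have h': "?w \<bullet> cs j \<ge> 0" using h DU by (simp add: gradVc_inner)
      have "?w \<bullet> c0 < 0" using c0 upd by (simp add: gradVc_inner)
      hence "- ?w \<noteq> 0" by auto
      moreover have "Cs j \<subseteq> Cs (j - 1) \<inter> {c. (- ?w) \<bullet> c \<ge> (- ?w) \<bullet> cs j}"
        using upd h' by (auto simp: gradVc_inner)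
      ultimately show ?thesis by blast
    qed
  qed
qed

end
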